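(* Let $S=\mathbb{C}[x_1,x_2,x_3]$ and let $m$ be a positive integer. Then $h_1,h_4,h_m$ form a regular sequence in $S$ if and only if $m=3k$ for some integer $k\ge 1$.
   Context: $h_d=\sum_{1\le i_1\le\cdots\le i_d\le 3}x_{i_1}\cdots x_{i_d}$ denotes the complete symmetric polynomial of degree $d$ in three variables. A sequence $y_1,\dots,y_d$ in $S$ is a regular sequence if $\langle y_1,\dots,y_d\rangle\ne S$ and for each $i$ the image of $y_{i+1}$ is a nonzero divisor in $S/\langle y_1,\dots,y_i\rangle$. *)

theory Defs
  imports Complex_Main "HOL-Computational_Algebra.Polynomial"
begin

text \<open>The polynomial ring S = C[x1,x2,x3] is represented as the iterated univariate
polynomial ring C[x1][x2][x3], i.e. the type complex poly poly poly.\<close>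

type_synonym S3 = "complex poly poly poly"

definition X1 :: S3 where "X1 = [:[:[:0, 1:]:]:]"
definition X2 :: S3 where "X2 = [:[:0, 1:]:]"
definition X3 :: S3 where "X3 = [:0, 1:]"

definition h :: "nat \<Rightarrow> S3" where
  "h d = (\<Sum>(a, b) \<in> {(a, b). a + b \<le> d}. X1 ^ a * X2 ^ b * X3 ^ (d - a - b))"

definition gen_ideal :: "'a::comm_ring_1 list \<Rightarrow> 'a set" where
  "gen_ideal ys = {\<Sum>i<length ys. r i * ys ! i | r. True}"

definition regular_sequence :: "'a::comm_ring_1 list \<Rightarrow> bool" where
  "regular_sequence ys \<longleftrightarrow>
     gen_ideal ys \<noteq> UNIV \<and>
     (\<forall>i < length ys. \<forall>z. ys ! i * z \<in> gen_ideal (take i ys) \<longrightarrow> z \<in> gen_ideal (take i ys))"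

end

theory Submission
  imports Defs
begin

fun g2 :: "'a::comm_ring_1 \<Rightarrow> 'a \<Rightarrow> nat \<Rightarrow> 'a" where
  "g2 x y 0 = 1" | "g2 x y (Suc n) = y * g2 x y n + x ^ Suc n"
fun g3 :: "'a::comm_ring_1 \<Rightarrow> 'a \<Rightarrow> 'a \<Rightarrow> nat \<Rightarrow> 'a" where
  "g3 x y z 0 = 1" | "g3 x y z (Suc n) = z * g3 x y z n + g2 x y (Suc n)"

lemma g2_sum: "(\<Sum>a\<le>n. x ^ a * y ^ (n - a)) = g2 x y n"
proof (induction n)
  case 0 then show ?case by simp
next
  case (Suc n)
  have "(\<Sum>a\<le>Suc n. x ^ a * y ^ (Suc n - a)) = (\<Sum>a\<le>n. x ^ a * y ^ (Suc n - a)) + x ^ Suc n"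
    by simp
  also have "(\<Sum>a\<le>n. x ^ a * y ^ (Suc n - a)) = y * (\<Sum>a\<le>n. x ^ a * y ^ (n - a))"
    by (simp add: sum_distrib_left Suc_diff_le algebra_simps)
  finally show ?case using Suc by simp
qed

lemma g2_pairs: "(\<Sum>(a, b) \<in> {(a, b). a + b = n}. x ^ a * y ^ b) = g2 x y n"
proof -
  have "{(a, b). a + b = n} = (\<lambda>a. (a, n - a)) ` {..n}" by auto
  moreover have "inj_on (\<lambda>a. (a, n - a)) {..n}" by (auto simp: inj_on_def)
  ultimately have "(\<Sum>(a, b) \<in> {(a, b). a + b = n}. x ^ a * y ^ b) = (\<Sum>a\<le>n. x ^ a * y ^ (n - a))"
    by (simp add: sum.reindex)
  then show ?thesis by (simp add: g2_sum)
qed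

lemma fin_pairs: "finite {(a::nat, b::nat). a + b \<le> d}"
  by (rule finite_subset[of _ "{..d} \<times> {..d}"]) auto

lemma g3_sum: "(\<Sum>(a, b) \<in> {(a, b). a + b \<le> d}. x ^ a * y ^ b * z ^ (d - a - b)) = g3 x y z d"
proof (induction d)
  case 0
  have "{(a::nat, b::nat). a + b \<le> 0} = {(0,0)}" by auto
  then show ?case by simp
next
  case (Suc d)
  have split: "{(a, b). a + b \<le> Suc d} = {(a, b). a + b \<le> d} \<union> {(a, b). a + b = Suc d}" by auto
  have fin2: "finite {(a::nat, b::nat). a + b = Suc d}"
    by (rule finite_subset[OF _ fin_pairs[of "Suc d"]]) auto
  have "(\<Sum>(a, b) \<in> {(a, b). a + b \<le> Suc d}. x ^ a * y ^ b * z ^ (Suc d - a - b))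
     = (\<Sum>(a, b) \<in> {(a, b). a + b \<le> d}. x ^ a * y ^ b * z ^ (Suc d - a - b))
     + (\<Sum>(a, b) \<in> {(a, b). a + b = Suc d}. x ^ a * y ^ b * z ^ (Suc d - a - b))"
    unfolding split by (rule sum.union_disjoint[OF fin_pairs fin2]) auto
  also have "(\<Sum>(a, b) \<in> {(a, b). a + b \<le> d}. x ^ a * y ^ b * z ^ (Suc d - a - b))
     = z * (\<Sum>(a, b) \<in> {(a, b). a + b \<le> d}. x ^ a * y ^ b * z ^ (d - a - b))"
    unfolding sum_distrib_left
    by (rule sum.cong) (auto simp: Suc_diff_le algebra_simps)
  also have "(\<Sum>(a, b) \<in> {(a, b). a + b = Suc d}. x ^ a * y ^ b * z ^ (Suc d - a - b))
     = (\<Sum>(a, b) \<in> {(a, b). a + b = Suc d}. x ^ a * y ^ b)"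
    by (rule sum.cong) auto
  finally show ?case using Suc by (simp add: g2_pairs)
qed

lemma h_g3: "h d = g3 X1 X2 X3 d"
  unfolding h_def by (rule g3_sum)

lemma g2_poly: "poly (g2 x y n) a = g2 (poly x a) (poly y a) n"
  by (induction n) auto
lemma g3_poly: "poly (g3 x y z n) a = g3 (poly x a) (poly y a) (poly z a) n"
  by (induction n) (auto simp: g2_poly)

lemma g2_rec: "g2 x y (Suc (Suc n)) = (x + y) * g2 x y (Suc n) - x * y * g2 x y n"
  by (simp add: algebra_simps)

lemma g3_rec: "g3 x y z (n + 3) = (x+y+z) * g3 x y z (n+2) - (x*y+y*z+z*x) * g3 x y z (n+1) + x*y*z * g3 x y z n"
  by (simp add: numeral_3_eq_3 numeral_2_eq_2 algebra_simps)


lemma g3_rec0: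
  fixes x y z :: "'a::comm_ring_1"
  assumes "x + y + z = 0"
  shows "g3 x y z (n + 3) = - (x*y+y*z+z*x) * g3 x y z (n+1) + x*y*z * g3 x y z n"
  using g3_rec[of x y z n] unfolding assms by (simp del: g3.simps g2.simps add: algebra_simps)

lemma g3_1: "x + y + z = 0 \<Longrightarrow> g3 x y z 1 = 0"
  by (simp add: algebra_simps)

lemma g3_2:
  fixes x y z :: "'a::comm_ring_1"
  assumes "x + y + z = 0"
  shows "g3 x y z 2 = - (x*y+y*z+z*x)"
proof -
  have z: "z = - x - y" using assms by (simp add: algebra_simps eq_neg_iff_add_eq_0)
  show ?thesis by (simp add: z numeral_2_eq_2 algebra_simps power2_eq_square)
qed

lemma g3_4:
  fixes x y z :: "'a::comm_ring_1"
  assumes "x + y + z = 0"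
  shows "g3 x y z 4 = (x*y+y*z+z*x)^2"
proof -
  have a: "(1::nat)+3 = 4" "(1::nat)+1 = 2" by simp_all
  have "g3 x y z 4 = - (x*y+y*z+z*x) * g3 x y z 2 + x*y*z * g3 x y z 1"
    using g3_rec0[OF assms, of 1] unfolding a .
  then show ?thesis unfolding g3_1[OF assms] g3_2[OF assms]
    by (simp only: mult_zero_right add_0_right minus_mult_minus power2_eq_square)
qed

lemma g3_mod:
  fixes x y z :: "'a::comm_ring_1"
  assumes "x + y + z = 0"
  shows "\<exists>q. g3 x y z n = (if 3 dvd n then (x*y*z)^(n div 3) else 0) + (x*y+y*z+z*x) * q"
proof (induction n rule: less_induct)
  case (less n)
  show ?case
  proof (cases "n < 3")
    case True
    then have "n = 0 \<or> n = 1 \<or> n = 2" by auto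
    then show ?thesis
    proof (elim disjE)
      assume "n = 0" then show ?thesis by (intro exI[of _ 0]) simp
    next
      assume "n = 1" then show ?thesis using g3_1[OF assms] by (intro exI[of _ 0]) simp
    next
      assume "n = 2" then show ?thesis using g3_2[OF assms] by (intro exI[of _ "-1"]) simp
    qed
  next
    case False
    then obtain k where n: "n = k + 3" by (metis add.commute le_Suc_ex not_less)
    obtain q where q: "g3 x y z k = (if 3 dvd k then (x*y*z)^(k div 3) else 0) + (x*y+y*z+z*x) * q"
      using less.IH[of k] n by auto
    have dv: "3 dvd n \<longleftrightarrow> 3 dvd k" using n by auto
    have dd: "3 dvd k \<Longrightarrow> n div 3 = Suc (k div 3)" using n by auto
    have "g3 x y z n = - (x*y+y*z+z*x) * g3 x y z (k+1) + x*y*z * g3 x y z k"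
      using g3_rec0[OF assms] n by simp
    also have "\<dots> = (if 3 dvd n then (x*y*z)^(n div 3) else 0)
        + (x*y+y*z+z*x) * (x*y*z*q - g3 x y z (k+1))"
      unfolding q using dv dd by (auto simp: algebra_simps)
    finally show ?thesis by blast
  qed
qed


definition om :: complex where "om = Complex (-1/2) (sqrt 3 / 2)"
lemma om_eq: "om^2 + om + 1 = 0"
  by (simp add: om_def power2_eq_square complex_eq_iff)
lemma om_ne0: "om \<noteq> 0" by (simp add: om_def complex_eq_iff)
lemma om_sq: "om^2 = Complex (-1/2) (- sqrt 3 / 2)"
  by (simp add: om_def power2_eq_square complex_eq_iff)
lemma om2_eq: "(om^2)^2 + om^2 + 1 = 0"
  unfolding om_sq by (simp add: power2_eq_square complex_eq_iff)
lemma om_prod: "om * om^2 = 1" "om + om^2 = -1"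
  unfolding om_sq by (simp_all add: om_def complex_eq_iff)

definition x1 :: "complex poly" where "x1 = [:0, 1:]"
definition Y1 :: "complex poly poly" where "Y1 = [:x1:]"
definition Y2 :: "complex poly poly" where "Y2 = [:0, 1:]"
definition cc :: "complex poly poly" where "cc = - (Y1 + Y2)"
definition EE :: "complex poly poly" where "EE = Y1 * Y2 + Y2 * cc + cc * Y1"
definition LL :: "complex \<Rightarrow> complex poly poly" where "LL w = [:- [:0, w:], 1:]"

lemma sum0: "Y1 + Y2 + cc = 0" by (simp add: cc_def)

lemma psi_h: "poly (h d) cc = g3 Y1 Y2 cc d"
  by (simp add: h_g3 g3_poly X1_def X2_def X3_def Y1_def Y2_def x1_def)

lemma h1_eq: "h 1 = [:- cc, 1:]"
  by (simp add: h_g3 X1_def X2_def X3_def cc_def Y1_def Y2_def x1_def)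

lemma psi_h4: "poly (h 4) cc = EE^2"
  unfolding psi_h EE_def by (rule g3_4[OF sum0])
lemma psi_h2: "poly (h 2) cc = - EE"
  unfolding psi_h EE_def by (rule g3_2[OF sum0])

lemma EE_fact:
  assumes "w * v = 1" "w + v = -1"
  shows "EE = - (LL w * LL v)"
proof -
  have "LL w * LL v = [:[:0,0,w*v:], [:0,-(w+v):], 1::complex poly:]"
    unfolding LL_def by (simp add: algebra_simps)
  also have "\<dots> = Y1^2 + Y1 * Y2 + Y2^2"
    using assms by (simp add: Y1_def Y2_def x1_def algebra_simps power2_eq_square)
  finally show ?thesis by (simp add: EE_def cc_def algebra_simps power2_eq_square)
qed



lemma EE_eq: "EE = - (LL om * LL (om^2))" by (rule EE_fact[OF om_prod])

lemma LL_root: "poly (LL w) [:0, w:] = 0" by (simp add: LL_def)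
lemma LL_ne0: "LL w \<noteq> 0" by (simp add: LL_def)

lemma EE_root1: "poly EE [:0, om:] = 0" by (simp add: EE_eq LL_root)
lemma EE_root2: "poly EE [:0, om^2:] = 0" by (simp add: EE_eq LL_root)
lemma EE_ne0: "EE \<noteq> 0" by (simp add: EE_eq LL_ne0)

lemma hm_nonroot:
  assumes "w^2 + w + 1 = 0" "poly EE [:0, w:] = 0" "3 dvd m"
  shows "poly (poly (h m) cc) [:0, w:] \<noteq> 0"
proof -
  obtain q where q: "g3 Y1 Y2 cc m = (if 3 dvd m then (Y1*Y2*cc)^(m div 3) else 0) + EE * q"
    using g3_mod[OF sum0, of m] unfolding EE_def by blast
  have w0: "w \<noteq> 0" using assms(1) by auto
  have w1: "1 + w \<noteq> 0"
  proof
    assume "1 + w = 0" then have "w = -1" by (simp add: eq_neg_iff_add_eq_0 add.commute)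
    then show False using assms(1) by simp
  qed
  have w1': "-1 \<noteq> w" using w1 by (auto simp: eq_neg_iff_add_eq_0 add.commute)
  have "poly (poly (h m) cc) [:0, w:] = poly (Y1*Y2*cc) [:0, w:] ^ (m div 3)"
    unfolding psi_h q using assms(2,3) by (simp add: poly_power)
  also have "\<dots> \<noteq> 0"
    using w0 w1 w1' by (simp add: Y1_def Y2_def cc_def x1_def)
  finally show ?thesis .
qed

lemma gen_ideal0: "gen_ideal [] = {0}" by (simp add: gen_ideal_def)
lemma gen_ideal1: "gen_ideal [a] = {u * a | u. True}"
proof -
  have e: "\<And>r. (\<Sum>i<length [a]. r i * [a] ! i) = r 0 * a" by simp
  show ?thesis unfolding gen_ideal_def e
  proof (intro equalityI subsetI)
    fix f assume "f \<in> {r (0::nat) * a |r. True}" then show "f \<in> {u * a |u. True}" by blast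
  next
    fix f assume "f \<in> {u * a |u. True}"
    then obtain u where "f = u * a" by blast
    then show "f \<in> {r (0::nat) * a |r. True}"
      by (auto intro: exI[of _ "\<lambda>i::nat. u"])
  qed
qed
lemma gen_ideal2: "gen_ideal [a, b] = {u * a + v * b | u v. True}"
proof -
  have "{..<2::nat} = {0, 1}" by auto
  then have e: "\<And>r. (\<Sum>i<length [a,b]. r i * [a,b] ! i) = r 0 * a + r 1 * b" by simp
  show ?thesis unfolding gen_ideal_def e
  proof (intro equalityI subsetI)
    fix f assume "f \<in> {r (0::nat) * a + r 1 * b |r. True}" then show "f \<in> {u * a + v * b |u v. True}" by blast
  next
    fix f assume "f \<in> {u * a + v * b |u v. True}"
    then obtain u v where "f = u * a + v * b" by blast
    then show "f \<in> {r (0::nat) * a + r 1 * b |r. True}"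
      by (intro CollectI exI[of _ "\<lambda>i::nat. if i = 0 then u else v"]) simp
  qed
qed
lemma gen_ideal3: "gen_ideal [a, b, c] = {u * a + v * b + w * c | u v w. True}"
proof -
  have "{..<3::nat} = {0, 1, 2}" by auto
  then have e: "\<And>r. (\<Sum>i<length [a,b,c]. r i * [a,b,c] ! i) = r 0 * a + r 1 * b + r 2 * c"
    by (simp add: algebra_simps numeral_2_eq_2)
  show ?thesis unfolding gen_ideal_def e
  proof (intro equalityI subsetI)
    fix f assume "f \<in> {r (0::nat) * a + r 1 * b + r 2 * c |r. True}"
    then show "f \<in> {u * a + v * b + w * c |u v w. True}" by blast
  next
    fix f assume "f \<in> {u * a + v * b + w * c |u v w. True}"
    then obtain u v w where "f = u * a + v * b + w * c" by blast
    then show "f \<in> {r (0::nat) * a + r 1 * b + r 2 * c |r. True}"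
      by (intro CollectI exI[of _ "\<lambda>i::nat. if i = 0 then u else if i = 1 then v else w"]) simp
  qed
qed

lemma mem_I: "f \<in> gen_ideal [h 1, h 4] \<longleftrightarrow> poly (h 4) cc dvd poly f cc"
proof
  assume "f \<in> gen_ideal [h 1, h 4]"
  then obtain u v where f: "f = u * h 1 + v * h 4" unfolding gen_ideal2 by blast
  have "poly f cc = poly u cc * poly (h 1) cc + poly v cc * poly (h 4) cc" by (simp only: f poly_mult poly_add)
  also have "poly (h 1) cc = 0" unfolding h1_eq by simp
  finally have "poly f cc = poly v cc * poly (h 4) cc" by simp
  then show "poly (h 4) cc dvd poly f cc" by simp
next
  assume "poly (h 4) cc dvd poly f cc"
  then obtain w where w: "poly f cc = poly (h 4) cc * w" by blast
  have "poly (f - [:w:] * h 4) cc = 0" by (simp add: w)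
  then have "[:- cc, 1:] dvd f - [:w:] * h 4" unfolding poly_eq_0_iff_dvd .
  then obtain q where "f - [:w:] * h 4 = [:- cc, 1:] * q" by blast
  then have "f = [:- cc, 1:] * q + [:w:] * h 4" by (metis diff_eq_eq)
  then have "f = q * h 1 + [:w:] * h 4" unfolding h1_eq by (simp only: mult.commute)
  then show "f \<in> gen_ideal [h 1, h 4]" unfolding gen_ideal2 by blast
qed

lemma root_pow:
  fixes H Z :: "'a::idom poly"
  assumes "poly H a \<noteq> 0" "[:-a, 1:]^n dvd H * Z"
  shows "[:-a, 1:]^n dvd Z"
  using assms(2)
proof (induction n arbitrary: Z)
  case 0 then show ?case by simp
next
  case (Suc n)
  have "[:-a, 1:] dvd [:-a, 1:]^Suc n" by (simp only: power_Suc dvd_triv_left)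
  then have "[:-a, 1:] dvd H * Z" using Suc.prems by (rule dvd_trans)
  then have "poly (H * Z) a = 0" unfolding poly_eq_0_iff_dvd .
  then have "poly Z a = 0" using assms(1) by simp
  then obtain Z1 where Z1: "Z = [:-a, 1:] * Z1" by (auto simp: poly_eq_0_iff_dvd)
  have "[:-a, 1:] * [:-a, 1:]^n dvd [:-a, 1:] * (H * Z1)"
    using Suc.prems unfolding Z1 by (simp add: algebra_simps)
  then have "[:-a, 1:]^n dvd H * Z1" by (simp only: dvd_mult_cancel_left pCons_eq_0_iff one_neq_zero simp_thms)
  then have "[:-a, 1:]^n dvd Z1" by (rule Suc.IH)
  then show ?case unfolding Z1 power_Suc by (rule mult_dvd_mono[OF dvd_refl])
qed


lemma g3_zero: "g3 0 0 (0::'a::comm_ring_1) (Suc n) = 0"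
  by simp

lemma ev0_h: "d > 0 \<Longrightarrow> poly (poly (poly (h d) 0) 0) 0 = 0"
  by (cases d) (simp_all add: h_g3 g3_poly X1_def X2_def X3_def del: g3.simps, simp)

lemma proper: "m > 0 \<Longrightarrow> gen_ideal [h 1, h 4, h m] \<noteq> UNIV"
proof
  assume m: "m > 0" and U: "gen_ideal [h 1, h 4, h m] = UNIV"
  then have "1 \<in> gen_ideal [h 1, h 4, h m]" by simp
  then obtain u v w where e: "1 = u * h 1 + v * h 4 + w * h m" unfolding gen_ideal3 by blast
  have "poly (poly (poly (1::S3) 0) 0) 0 = poly (poly (poly (u * h 1 + v * h 4 + w * h m) 0) 0) 0"
    using e by simp
  also have "\<dots> = 0" using ev0_h[of 1] ev0_h[of 4] ev0_h[OF m] by simp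
  finally show False by simp
qed

lemma step1: "h 4 * z \<in> gen_ideal [h 1] \<Longrightarrow> z \<in> gen_ideal [h 1]"
proof -
  assume "h 4 * z \<in> gen_ideal [h 1]"
  then obtain u where e: "h 4 * z = u * h 1" unfolding gen_ideal1 by blast
  have "poly (h 1) cc = 0" unfolding h1_eq by simp
  then have "poly (h 4) cc * poly z cc = 0" using arg_cong[OF e, of "\<lambda>p. poly p cc"] by simp
  then have "poly z cc = 0" using EE_ne0 by (simp add: psi_h4)
  then have "[:- cc, 1:] dvd z" unfolding poly_eq_0_iff_dvd .
  then obtain q where "z = [:- cc, 1:] * q" by blast
  then show ?thesis unfolding gen_ideal1 h1_eq by (auto simp: mult.commute)
qed

lemma h1_ne0: "h 1 \<noteq> 0" unfolding h1_eq by simp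
lemma step0: "h 1 * z \<in> gen_ideal [] \<Longrightarrow> z \<in> gen_ideal []"
  unfolding gen_ideal0 using h1_ne0 by simp
lemma sqlem: "(-(A*B))^2 = (A::'a::comm_ring_1)^2 * B^2" by (simp add: power2_eq_square algebra_simps)

lemma om_ne_om2: "om \<noteq> om^2"
  unfolding om_sq by (simp add: om_def complex_eq_iff)

lemma polyL: "poly [:-[:0,w:], 1:] [:0,v:] = [:0, v - (w::complex):]"
  by (simp add: algebra_simps)

lemma sq_nz: "(c::'a::idom) \<noteq> 0 \<Longrightarrow> poly p x = c \<Longrightarrow> poly (p^2) x \<noteq> 0"
  by (simp add: poly_power)

lemma step2:
  assumes "3 dvd m" "h m * z \<in> gen_ideal [h 1, h 4]"
  shows "z \<in> gen_ideal [h 1, h 4]"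
proof -
  define H where "H = poly (h m) cc"
  define Z where "Z = poly z cc"
  define a1 where "a1 = [:0, om:]"
  define a2 where "a2 = [:0, om^2:]"
  have L1: "LL om = [:-a1, 1:]" unfolding LL_def a1_def ..
  have L2: "LL (om^2) = [:-a2, 1:]" unfolding LL_def a2_def ..
  have E2: "EE^2 = [:-a1, 1:]^2 * [:-a2, 1:]^2"
    unfolding EE_eq L1 L2 by (rule sqlem)
  have d: "[:-a1, 1:]^2 * [:-a2, 1:]^2 dvd H * Z"
    using assms(2) unfolding mem_I psi_h4 E2 H_def Z_def by (simp only: poly_mult)
  have H1: "poly H a1 \<noteq> 0" unfolding H_def a1_def
    by (rule hm_nonroot[OF om_eq EE_root1 assms(1)])
  have H2: "poly H a2 \<noteq> 0" unfolding H_def a2_def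
    by (rule hm_nonroot[OF om2_eq EE_root2 assms(1)])
  have "[:-a1, 1:]^2 dvd H * Z" using d by (rule dvd_mult_left)
  then have "[:-a1, 1:]^2 dvd Z" by (rule root_pow[OF H1])
  then obtain Z1 where Z1: "Z = [:-a1, 1:]^2 * Z1" by blast
  have "[:-a2, 1:]^2 dvd H * ([:-a1, 1:]^2 * Z1)"
    using d unfolding Z1 by (rule dvd_mult_right)
  then have dv: "[:-a2, 1:]^2 dvd (H * [:-a1, 1:]^2) * Z1" by (simp only: mult.assoc)
  have nz: "poly (H * [:-a1, 1:]^2) a2 \<noteq> 0"
  proof -
    have pa: "poly [:-a1, 1:] a2 = [:0, om^2 - om:]" unfolding a1_def a2_def by (rule polyL)
    have pb: "[:0, om^2 - om:] \<noteq> 0" by (metis om_ne_om2 pCons_eq_0_iff right_minus_eq)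
    have pc: "poly ([:-a1, 1:]^2) a2 \<noteq> 0" by (rule sq_nz[OF pb pa])
    show ?thesis unfolding poly_mult by (rule no_zero_divisors[OF H2 pc])
  qed
  from nz dv have "[:-a2, 1:]^2 dvd Z1" by (rule root_pow)
  then have "EE^2 dvd Z" unfolding E2 Z1 by (rule mult_dvd_mono[OF dvd_refl])
  then show ?thesis unfolding mem_I psi_h4 Z_def .
qed

lemma nonreg:
  assumes "\<not> 3 dvd m"
  shows "h m * h 2 \<in> gen_ideal [h 1, h 4]" "h 2 \<notin> gen_ideal [h 1, h 4]"
proof -
  obtain q where q: "g3 Y1 Y2 cc m = (if 3 dvd m then (Y1*Y2*cc)^(m div 3) else 0) + EE * q"
    using g3_mod[OF sum0, of m] unfolding EE_def by blast
  have "poly (h m * h 2) cc = EE^2 * (- q)"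
    unfolding poly_mult psi_h2 using q assms by (simp add: psi_h power2_eq_square algebra_simps)
  then show "h m * h 2 \<in> gen_ideal [h 1, h 4]" unfolding mem_I psi_h4 by simp
  show "h 2 \<notin> gen_ideal [h 1, h 4]"
  proof
    assume "h 2 \<in> gen_ideal [h 1, h 4]"
    then have "EE * EE dvd EE * 1" unfolding mem_I psi_h4 psi_h2 by (simp add: power2_eq_square)
    then have "EE dvd 1" using EE_ne0 by simp
    then obtain k where "1 = EE * k" by blast
    then have "poly 1 [:0, om:] = poly (EE * k) [:0, om:]" by (rule arg_cong)
    then show False using EE_root1 by simp
  qed
qed

theorem proposition4p7:
  fixes m :: nat
  assumes "m > 0"
  shows "regular_sequence [h 1, h 4, h m] \<longleftrightarrow> (\<exists>k::nat. k \<ge> 1 \<and> m = 3 * k)"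
proof -
  have ne: "(\<exists>k::nat. k \<ge> 1 \<and> m = 3 * k) \<longleftrightarrow> 3 dvd m" using assms by auto
  have all3: "\<And>P. (\<forall>i<3::nat. P i) \<longleftrightarrow> P 0 \<and> P 1 \<and> P 2"
    by (auto simp: numeral_3_eq_3 less_Suc_eq numeral_2_eq_2)
  have len: "length [h 1, h 4, h m] = 3" by simp
  have RS: "regular_sequence [h 1, h 4, h m] \<longleftrightarrow> gen_ideal [h 1, h 4, h m] \<noteq> UNIV \<and>
      (\<forall>z. h 1 * z \<in> gen_ideal [] \<longrightarrow> z \<in> gen_ideal []) \<and>
      (\<forall>z. h 4 * z \<in> gen_ideal [h 1] \<longrightarrow> z \<in> gen_ideal [h 1]) \<and>
      (\<forall>z. h m * z \<in> gen_ideal [h 1, h 4] \<longrightarrow> z \<in> gen_ideal [h 1, h 4])"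
    unfolding regular_sequence_def len all3 by simp
  show ?thesis
  proof (cases "3 dvd m")
    case True
    then show ?thesis unfolding ne RS using proper[OF assms] step0 step1 step2 by blast
  next
    case False
    then show ?thesis unfolding ne RS using nonreg[OF False] by blast
  qed
qed

end
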